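(* Let $\mathcal{G}=(V,\mathit{Act},\mathcal{R})$ be a normed BPA system. For all $\alpha,\beta,\gamma\in V^*$: $\alpha\gamma\sim\beta\gamma$ if and only if $\alpha\sim_{R_\gamma}\beta$.
   Context: A BPA system $\mathcal{G}=(V,\mathit{Act},\mathcal{R})$: finite variables $V$, finite actions $\mathit{Act}$ (possibly containing the silent action $\tau$), rules $A\xrightarrow{a}\alpha$ ($A\in V,\alpha\in V^*$). LTS $\mathcal{L}_\mathcal{G}$: states $V^*$, transitions $A\beta\xrightarrow{a}\alpha\beta$ for rules $A\xrightarrow{a}\alpha$, $\beta\in V^*$. $\mathcal{G}$ is normed if every variable can reach $\varepsilon$ by a sequence of transitions. Branching bisimilarity $\sim$ on an LTS: the largest relation $\mathcal{B}$ such that for $(s,t)\in\mathcal{B}$ each move $s\xrightarrow{a}s'$ is matched either by $a=\tau$ and $(s',t)\in\mathcal{B}$, or by a path $t=t_0\xrightarrow{\tau}\cdots\xrightarrow{\tau}t_k\xrightarrow{a}t'$ with $(s',t')\in\mathcal{B}$, $(s,t_i)\in\mathcal{B}$ for $i\in[1,k]$; and symmetrically. $\sim$ without subscript refers to $\mathcal{L}_\mathcal{G}$. For $\gamma\in V^*$, $R_\gamma=\{X\in V\mid X\gamma\sim\gamma\}$. For $R\subseteq V$, the LTS $\mathcal{L}_{\mathcal{G},R}$ is obtained from $\mathcal{L}_\mathcal{G}$ by removing all outgoing transitions of every state $\alpha\in R^*$; $\alpha\sim_R\beta$ means $\alpha$ and $\beta$ are branching bisimilar in $\mathcal{L}_{\mathcal{G},R}$.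 *)

theory Defs
  imports Main
begin

text \<open>Actions are of type 'a option; the silent action tau is None.
  A BPA system is given by a variable set V, an action set Act and a rule set Rules,
  a rule A -a-> alpha being a triple (A, a, alpha).\<close>

definition bpa :: "'v set \<Rightarrow> 'a option set \<Rightarrow> ('v \<times> 'a option \<times> 'v list) set \<Rightarrow> bool" where
  "bpa V Act Rules \<longleftrightarrow> finite V \<and> finite Act \<and> finite Rules \<and>
     (\<forall>(A, a, \<alpha>) \<in> Rules. A \<in> V \<and> a \<in> Act \<and> \<alpha> \<in> lists V)"

definition bpa_step :: "'v set \<Rightarrow> ('v \<times> 'a option \<times> 'v list) set \<Rightarrow> 'v list \<Rightarrow> 'a option \<Rightarrow> 'v list \<Rightarrow> bool" where
  "bpa_step V Rules s a t \<longleftrightarrow>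
     (\<exists>A \<alpha> \<beta>. (A, a, \<alpha>) \<in> Rules \<and> \<beta> \<in> lists V \<and> s = A # \<beta> \<and> t = \<alpha> @ \<beta>)"

definition bpa_step_R :: "'v set \<Rightarrow> ('v \<times> 'a option \<times> 'v list) set \<Rightarrow> 'v set \<Rightarrow> 'v list \<Rightarrow> 'a option \<Rightarrow> 'v list \<Rightarrow> bool" where
  "bpa_step_R V Rules R s a t \<longleftrightarrow> bpa_step V Rules s a t \<and> s \<notin> lists R"

definition normed :: "'v set \<Rightarrow> ('v \<times> 'a option \<times> 'v list) set \<Rightarrow> bool" where
  "normed V Rules \<longleftrightarrow>
     (\<forall>X \<in> V. (\<lambda>s t. \<exists>a. bpa_step V Rules s a t)\<^sup>*\<^sup>* [X] [])"

definition bb_transfer :: "('s \<Rightarrow> 'a option \<Rightarrow> 's \<Rightarrow> bool) \<Rightarrow> ('s \<times> 's) set \<Rightarrow> bool" where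
  "bb_transfer T B \<longleftrightarrow>
     (\<forall>s t. (s, t) \<in> B \<longrightarrow> (\<forall>a s'. T s a s' \<longrightarrow>
        (a = None \<and> (s', t) \<in> B) \<or>
        (\<exists>k p t'. p 0 = t \<and> (\<forall>i<k. T (p i) None (p (Suc i))) \<and> T (p k) a t' \<and>
                  (s', t') \<in> B \<and> (\<forall>i\<in>{1..k}. (s, p i) \<in> B))))"

definition branching_bisimulation :: "'s set \<Rightarrow> ('s \<Rightarrow> 'a option \<Rightarrow> 's \<Rightarrow> bool) \<Rightarrow> ('s \<times> 's) set \<Rightarrow> bool" where
  "branching_bisimulation S T B \<longleftrightarrow> B \<subseteq> S \<times> S \<and> bb_transfer T B \<and> bb_transfer T (B\<inverse>)"

definition branching_bisimilar :: "'s set \<Rightarrow> ('s \<Rightarrow> 'a option \<Rightarrow> 's \<Rightarrow> bool) \<Rightarrow> 's \<Rightarrow> 's \<Rightarrow> bool" where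
  "branching_bisimilar S T s t \<longleftrightarrow> (\<exists>B. branching_bisimulation S T B \<and> (s, t) \<in> B)"

definition bpa_bisim :: "'v set \<Rightarrow> ('v \<times> 'a option \<times> 'v list) set \<Rightarrow> 'v list \<Rightarrow> 'v list \<Rightarrow> bool" where
  "bpa_bisim V Rules = branching_bisimilar (lists V) (bpa_step V Rules)"

definition bpa_bisim_R :: "'v set \<Rightarrow> ('v \<times> 'a option \<times> 'v list) set \<Rightarrow> 'v set \<Rightarrow> 'v list \<Rightarrow> 'v list \<Rightarrow> bool" where
  "bpa_bisim_R V Rules R = branching_bisimilar (lists V) (bpa_step_R V Rules R)"

definition R_of :: "'v set \<Rightarrow> ('v \<times> 'a option \<times> 'v list) set \<Rightarrow> 'v list \<Rightarrow> 'v set" where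
  "R_of V Rules \<gamma> = {X \<in> V. bpa_bisim V Rules (X # \<gamma>) \<gamma>}"

end

theory Submission
  imports Defs
begin


abbreviation taus :: "('s \<Rightarrow> 'a option \<Rightarrow> 's \<Rightarrow> bool) \<Rightarrow> 's \<Rightarrow> 's \<Rightarrow> bool" where
  "taus T \<equiv> (\<lambda>x y. T x None y)\<^sup>*\<^sup>*"

definition match :: "('s \<Rightarrow> 'a option \<Rightarrow> 's \<Rightarrow> bool) \<Rightarrow> ('s \<times> 's) set \<Rightarrow> 's \<Rightarrow> 's \<Rightarrow> 'a option \<Rightarrow> 's \<Rightarrow> bool" where
  "match T B s t a s' \<longleftrightarrow>
     (a = None \<and> (\<exists>t''. taus T t t'' \<and> (s,t'') \<in> B \<and> (s',t'') \<in> B)) \<or>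
     (\<exists>t'' t'. taus T t t'' \<and> T t'' a t' \<and> (s,t'') \<in> B \<and> (s',t') \<in> B)"

definition sbt :: "('s \<Rightarrow> 'a option \<Rightarrow> 's \<Rightarrow> bool) \<Rightarrow> ('s \<times> 's) set \<Rightarrow> bool" where
  "sbt T B \<longleftrightarrow> (\<forall>s t a s'. (s,t) \<in> B \<longrightarrow> T s a s' \<longrightarrow> match T B s t a s')"

lemma match_mono: "match T B s t a s' \<Longrightarrow> B \<subseteq> B' \<Longrightarrow> match T B' s t a s'"
  unfolding match_def by blast

lemma match_prefix: "taus T t t1 \<Longrightarrow> match T B s t1 a s' \<Longrightarrow> match T B s t a s'"
  unfolding match_def by (meson rtranclp_trans)

lemma path_rtranclp:
  assumes "\<forall>i<n. P (f i) (f (Suc i))" "i \<le> j" "j \<le> n"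
  shows "P\<^sup>*\<^sup>* (f i) (f j)"
  using assms(2,3)
proof (induction j)
  case 0 then show ?case by simp
next
  case (Suc j)
  show ?case
  proof (cases "i = Suc j")
    case True then show ?thesis by simp
  next
    case False
    then have "P\<^sup>*\<^sup>* (f i) (f j)" using Suc by simp
    moreover have "P (f j) (f (Suc j))" using assms(1) Suc.prems by simp
    ultimately show ?thesis by (rule rtranclp.rtrancl_into_rtrancl)
  qed
qed

lemma bb_sbt: "bb_transfer T B \<Longrightarrow> sbt T B"
  unfolding bb_transfer_def sbt_def match_def
proof (intro allI impI)
  fix s t a s'
  assume H: "\<forall>s t. (s, t) \<in> B \<longrightarrow> (\<forall>a s'. T s a s' \<longrightarrow> a = None \<and> (s', t) \<in> B \<or>
        (\<exists>k p t'. p 0 = t \<and> (\<forall>i<k. T (p i) None (p (Suc i))) \<and> T (p k) a t' \<and> (s', t') \<in> B \<and> (\<forall>i\<in>{1..k}. (s, p i) \<in> B)))"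
    and st: "(s,t) \<in> B" and tr: "T s a s'"
  from H st tr consider "a = None" "(s', t) \<in> B"
    | k p t' where "p 0 = t" "\<forall>i<k. T (p i) None (p (Suc i))" "T (p k) a t'" "(s', t') \<in> B" "\<forall>i\<in>{1..k}. (s, p i) \<in> B"
    by blast
  then show "a = None \<and> (\<exists>t''. taus T t t'' \<and> (s, t'') \<in> B \<and> (s', t'') \<in> B) \<or>
       (\<exists>t'' t'. taus T t t'' \<and> T t'' a t' \<and> (s, t'') \<in> B \<and> (s', t') \<in> B)"
  proof cases
    case 1 then show ?thesis using st by blast
  next
    case (2 k p t')
    have "taus T (p 0) (p k)"
      using path_rtranclp[of k "\<lambda>x y. T x None y" p 0 k] 2(2) by simp
    moreover have "(s, p k) \<in> B"
    proof (cases k)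
      case 0 then show ?thesis using 2(1) st by simp
    next
      case (Suc m) then show ?thesis using 2(5) by auto
    qed
    ultimately show ?thesis using 2 by blast
  qed
qed

locale lts =
  fixes S :: "'s set" and T :: "'s \<Rightarrow> 'a option \<Rightarrow> 's \<Rightarrow> bool"
  assumes closed: "T s a t \<Longrightarrow> t \<in> S"
begin

definition sbb :: "('s \<times> 's) set \<Rightarrow> bool" where
  "sbb B \<longleftrightarrow> B \<subseteq> S \<times> S \<and> sbt T B \<and> sbt T (B\<inverse>)"

definition sim :: "'s \<Rightarrow> 's \<Rightarrow> bool" where
  "sim s t \<longleftrightarrow> (\<exists>B. sbb B \<and> (s,t) \<in> B)"

lemma taus_closed: "taus T s t \<Longrightarrow> s \<in> S \<Longrightarrow> t \<in> S"
  by (induction rule: rtranclp_induct) (auto intro: closed)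

lemma path_transfer:
  assumes "sbt T B" "(x,y) \<in> B" "taus T x x'"
  shows "\<exists>y'. taus T y y' \<and> (x',y') \<in> B"
  using assms(3)
proof (induction rule: rtranclp_induct)
  case base then show ?case using assms(2) by blast
next
  case (step x1 x2)
  then obtain y1 where y1: "taus T y y1" "(x1,y1) \<in> B" by blast
  from assms(1) y1(2) step(2) have "match T B x1 y1 None x2" unfolding sbt_def by blast
  then show ?case unfolding match_def using y1(1)
    by (meson rtranclp.rtrancl_into_rtrancl rtranclp_trans)
qed

lemma sbt_Id: "sbt T (Id_on S)"
  unfolding sbt_def match_def using closed by blast

lemma sbt_comp:
  assumes "sbt T B1" "sbt T B2"
  shows "sbt T (B1 O B2)"
  unfolding sbt_def
proof (intro allI impI)
  fix s u a s'
  assume "(s,u) \<in> B1 O B2" and tr: "T s a s'"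
  then obtain t where st: "(s,t) \<in> B1" and tu: "(t,u) \<in> B2" by blast
  have "match T B1 s t a s'" using assms(1) st tr unfolding sbt_def by blast
  then consider t1 where "a = None" "taus T t t1" "(s,t1) \<in> B1" "(s',t1) \<in> B1"
    | t1 t2 where "taus T t t1" "T t1 a t2" "(s,t1) \<in> B1" "(s',t2) \<in> B1"
    unfolding match_def by blast
  then show "match T (B1 O B2) s u a s'"
  proof cases
    case (1 t1)
    obtain u1 where "taus T u u1" "(t1,u1) \<in> B2" using path_transfer[OF assms(2) tu 1(2)] by blast
    then show ?thesis using 1 unfolding match_def by blast
  next
    case (2 t1 t2)
    obtain u1 where u1: "taus T u u1" "(t1,u1) \<in> B2" using path_transfer[OF assms(2) tu 2(1)] by blast
    have "match T B2 t1 u1 a t2" using assms(2) u1(2) 2(2) unfolding sbt_def by blast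
    then consider u2 where "a = None" "taus T u1 u2" "(t1,u2) \<in> B2" "(t2,u2) \<in> B2"
      | u2 u3 where "taus T u1 u2" "T u2 a u3" "(t1,u2) \<in> B2" "(t2,u3) \<in> B2"
      unfolding match_def by blast
    then show ?thesis
    proof cases
      case (1 u2)
      then show ?thesis using 2 u1 unfolding match_def by (meson relcomp.relcompI rtranclp_trans)
    next
      case (2 u2 u3)
      then show ?thesis using \<open>(s,t1) \<in> B1\<close> \<open>(s',t2) \<in> B1\<close> u1 unfolding match_def
        by (meson relcomp.relcompI rtranclp_trans)
    qed
  qed
qed

lemma sbb_comp: "sbb B1 \<Longrightarrow> sbb B2 \<Longrightarrow> sbb (B1 O B2)"
  unfolding sbb_def using sbt_comp[of B1 B2] sbt_comp[of "B2\<inverse>" "B1\<inverse>"]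
  by (auto simp: converse_relcomp)

lemma sbb_SB: "sbb {(s,t). sim s t}"
  unfolding sbb_def
proof (intro conjI)
  show "{(s,t). sim s t} \<subseteq> S \<times> S" unfolding sim_def sbb_def by blast
  show "sbt T {(s,t). sim s t}" unfolding sbt_def
  proof (intro allI impI)
    fix s t a s' assume "(s,t) \<in> {(s,t). sim s t}" "T s a s'"
    then obtain B where B: "sbb B" "(s,t) \<in> B" unfolding sim_def by blast
    then have "match T B s t a s'" using \<open>T s a s'\<close> unfolding sbb_def sbt_def by blast
    moreover have "B \<subseteq> {(s,t). sim s t}" using B(1) unfolding sim_def by blast
    ultimately show "match T {(s,t). sim s t} s t a s'" by (rule match_mono)
  qed
  show "sbt T ({(s,t). sim s t}\<inverse>)" unfolding sbt_def
  proof (intro allI impI)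
    fix s t a s' assume "(s,t) \<in> {(s,t). sim s t}\<inverse>" "T s a s'"
    then obtain B where B: "sbb B" "(s,t) \<in> B\<inverse>" unfolding sim_def by blast
    then have "match T (B\<inverse>) s t a s'" using \<open>T s a s'\<close> unfolding sbb_def sbt_def by blast
    moreover have "B\<inverse> \<subseteq> {(s,t). sim s t}\<inverse>" using B(1) unfolding sim_def by blast
    ultimately show "match T ({(s,t). sim s t}\<inverse>) s t a s'" by (rule match_mono)
  qed
qed

lemma coind: "sbb B \<Longrightarrow> (s,t) \<in> B \<Longrightarrow> sim s t"
  unfolding sim_def by blast

lemma sbb_symI: "B \<subseteq> S \<times> S \<Longrightarrow> B\<inverse> = B \<Longrightarrow> sbt T B \<Longrightarrow> sbb B"
  unfolding sbb_def by simp

lemma sim_S: "sim s t \<Longrightarrow> s \<in> S \<and> t \<in> S"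
  unfolding sim_def sbb_def by blast

lemma sim_refl: "s \<in> S \<Longrightarrow> sim s s"
  using coind[of "Id_on S"] sbt_Id unfolding sbb_def by auto

lemma sim_sym: "sim s t \<Longrightarrow> sim t s"
  unfolding sim_def sbb_def by (metis converse_converse converse_iff converse_mono converse_Times)

lemma sim_trans: "sim s t \<Longrightarrow> sim t u \<Longrightarrow> sim s u"
  unfolding sim_def using sbb_comp by blast

lemma sim_step: "sim s t \<Longrightarrow> T s a s' \<Longrightarrow> match T {(s,t). sim s t} s t a s'"
  using sbb_SB unfolding sbb_def sbt_def by blast

lemma sim_taus: "sim x y \<Longrightarrow> taus T x x' \<Longrightarrow> \<exists>y'. taus T y y' \<and> sim x' y'"
  using path_transfer[of "{(s,t). sim s t}" x y x'] sbb_SB unfolding sbb_def by blast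

lemma stutter0:
  assumes "sim t0 tk" "taus T t0 t" "taus T t tk"
  shows "sim t tk"
proof -
  define R1 where "R1 = {(x,u). taus T t0 x \<and> taus T x tk \<and> sim u tk}"
  define R where "R = {(s,t). sim s t} \<union> R1 \<union> R1\<inverse>"
  have t0S: "t0 \<in> S" using sim_S assms(1) by blast
  have "sbb R"
  proof (rule sbb_symI)
    show "R \<subseteq> S \<times> S" unfolding R_def R1_def using sim_S taus_closed t0S by blast
    have sy: "{(s,t). sim s t}\<inverse> = {(s,t). sim s t}" using sim_sym by blast
    show "R\<inverse> = R" unfolding R_def converse_Un sy by blast
    show "sbt T R" unfolding sbt_def
    proof (intro allI impI)
      fix x y a x' assume xy: "(x,y) \<in> R" and tr: "T x a x'"
      have sub: "{(s,t). sim s t} \<subseteq> R" unfolding R_def by blast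
      consider "sim x y" | "(x,y) \<in> R1" | "(y,x) \<in> R1" using xy unfolding R_def by blast
      then show "match T R x y a x'"
      proof cases
        case 1 then show ?thesis using match_mono[OF sim_step[OF 1 tr] sub] by blast
      next
        case 2
        then have "taus T t0 x" "sim y tk" unfolding R1_def by auto
        then have "sim t0 y" using assms(1) sim_sym sim_trans by blast
        then obtain y1 where "taus T y y1" "sim x y1" using sim_taus \<open>taus T t0 x\<close> by blast
        then show ?thesis using match_mono[OF match_prefix[OF \<open>taus T y y1\<close> sim_step[OF \<open>sim x y1\<close> tr]] sub] by blast
      next
        case 3
        then have "taus T y tk" "sim x tk" unfolding R1_def by auto
        then show ?thesis using match_mono[OF match_prefix[OF \<open>taus T y tk\<close> sim_step[OF \<open>sim x tk\<close> tr]] sub] by blast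
      qed
    qed
  qed
  moreover have "sim tk tk" using sim_refl sim_S assms(1) by blast
  then have "(t, tk) \<in> R"
    unfolding R_def R1_def using assms(2,3) by blast
  ultimately show ?thesis by (rule coind)
qed

lemma stutter:
  assumes "sim s t0" "taus T t0 t" "taus T t tk" "sim s tk"
  shows "sim s t"
proof -
  have "sim t0 tk" using assms(1,4) sim_sym sim_trans by blast
  then have "sim t tk" using stutter0 assms(2,3) by blast
  then show ?thesis using assms(4) sim_sym sim_trans by blast
qed

lemma stuck:
  assumes "\<And>a u. \<not> T t a u" "sim s t" "T s a s'"
  shows "a = None \<and> sim s' t"
proof -
  have tt: "taus T t t'' \<Longrightarrow> t'' = t" for t''
    by (metis assms(1) converse_rtranclpE)
  show ?thesis using sim_step[OF assms(2,3)] assms(1) tt unfolding match_def by blast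
qed

lemma SB_bb: "bb_transfer T {(s,t). sim s t}"
  unfolding bb_transfer_def
proof (intro allI impI)
  fix s t a s' assume "(s,t) \<in> {(s,t). sim s t}" and tr: "T s a s'"
  then have st: "sim s t" by simp
  have M: "match T {(s,t). sim s t} s t a s'" using sim_step[OF st tr] .
  have inter: "\<forall>i\<in>{1..k}. sim s (f i)"
    if "f 0 = t" "\<forall>i<n. T (f i) None (f (Suc i))" "k \<le> n" "sim s (f n)" for f n k
  proof
    fix i assume "i \<in> {1..k}"
    have "taus T (f 0) (f i)" using path_rtranclp[of n "\<lambda>x y. T x None y" f 0 i] that \<open>i \<in> {1..k}\<close> by simp
    moreover have "taus T (f i) (f n)" using path_rtranclp[of n "\<lambda>x y. T x None y" f i n] that \<open>i \<in> {1..k}\<close> by simp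
    ultimately show "sim s (f i)" using stutter[of s "f 0" "f i" "f n"] that st by simp
  qed
  from M consider t1 where "a = None" "taus T t t1" "sim s t1" "sim s' t1"
    | t1 t2 where "taus T t t1" "T t1 a t2" "sim s t1" "sim s' t2"
    unfolding match_def by blast
  then show "a = None \<and> (s', t) \<in> {(s,t). sim s t} \<or>
       (\<exists>k p t'. p 0 = t \<and> (\<forall>i<k. T (p i) None (p (Suc i))) \<and> T (p k) a t' \<and>
          (s', t') \<in> {(s,t). sim s t} \<and> (\<forall>i\<in>{1..k}. (s, p i) \<in> {(s,t). sim s t}))"
  proof cases
    case (1 t1)
    obtain n where "((\<lambda>x y. T x None y) ^^ n) t t1" using 1(2) rtranclp_imp_relpowp by metis
    then obtain f where f: "f 0 = t" "f n = t1" "\<forall>i<n. T (f i) None (f (Suc i))"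
      unfolding relpowp_fun_conv by blast
    show ?thesis
    proof (cases n)
      case 0 then show ?thesis using 1 f by simp
    next
      case (Suc m)
      have "\<forall>i\<in>{1..m}. sim s (f i)" using inter[of f n m] f 1 Suc by simp
      moreover have "T (f m) None (f (Suc m))" using f(3) Suc by simp
      ultimately show ?thesis using 1 f Suc
        by (intro disjI2 exI[of _ m] exI[of _ f] exI[of _ "f (Suc m)"]) auto
    qed
  next
    case (2 t1 t2)
    obtain n where "((\<lambda>x y. T x None y) ^^ n) t t1" using 2(1) rtranclp_imp_relpowp by metis
    then obtain f where f: "f 0 = t" "f n = t1" "\<forall>i<n. T (f i) None (f (Suc i))"
      unfolding relpowp_fun_conv by blast
    have "\<forall>i\<in>{1..n}. sim s (f i)" using inter[of f n n] f 2 by simp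
    then show ?thesis using 2 f
      by (intro disjI2 exI[of _ n] exI[of _ f] exI[of _ t2]) auto
  qed
qed

lemma bisimilar_iff: "branching_bisimilar S T s t \<longleftrightarrow> sim s t"
proof
  assume "branching_bisimilar S T s t"
  then obtain B where "branching_bisimulation S T B" "(s,t) \<in> B"
    unfolding branching_bisimilar_def by blast
  then show "sim s t" unfolding branching_bisimulation_def
    using bb_sbt coind sbb_def by blast
next
  assume "sim s t"
  have "branching_bisimulation S T {(s,t). sim s t}"
    unfolding branching_bisimulation_def
  proof (intro conjI)
    show "{(s,t). sim s t} \<subseteq> S \<times> S" using sim_S by blast
    show "bb_transfer T {(s,t). sim s t}" by (rule SB_bb)
    have "{(s,t). sim s t}\<inverse> = {(s,t). sim s t}" using sim_sym by blast
    then show "bb_transfer T ({(s,t). sim s t}\<inverse>)" using SB_bb by simp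
  qed
  then show "branching_bisimilar S T s t" unfolding branching_bisimilar_def using \<open>sim s t\<close> by blast
qed

end



inductive vis :: "('s \<Rightarrow> 'a option \<Rightarrow> 's \<Rightarrow> bool) \<Rightarrow> 's \<Rightarrow> nat \<Rightarrow> 's \<Rightarrow> bool" for T where
  vis_refl: "vis T s 0 s"
| vis_tau: "T s None s' \<Longrightarrow> vis T s' n u \<Longrightarrow> vis T s n u"
| vis_act: "T s (Some b) s' \<Longrightarrow> vis T s' n u \<Longrightarrow> vis T s (Suc n) u"

lemma vis_taus_pre: "taus T s t \<Longrightarrow> vis T t n u \<Longrightarrow> vis T s n u"
proof (induction rule: converse_rtranclp_induct)
  case base then show ?case .
next
  case (step x y) then show ?case using vis_tau[of T x y n u] by simp
qed

lemma vis0_taus: "vis T s n u \<Longrightarrow> n = 0 \<Longrightarrow> taus T s u"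
proof (induction rule: vis.induct)
  case (vis_refl s) then show ?case by simp
next
  case (vis_tau s s' n u)
  then have "taus T s' u" by simp
  then show ?case using vis_tau.hyps(1) converse_rtranclp_into_rtranclp[of "\<lambda>x y. T x None y" s s' u] by simp
next
  case (vis_act s b s' n u) then show ?case by simp
qed

lemma vis_trans: "vis T s m u \<Longrightarrow> vis T u n w \<Longrightarrow> vis T s (m+n) w"
proof (induction rule: vis.induct)
  case (vis_refl s) then show ?case by simp
next
  case (vis_tau s s' m u)
  then show ?case using vis.vis_tau[of T s s' "m+n" w] by simp
next
  case (vis_act s b s' m u)
  then show ?case using vis.vis_act[of T s b s' "m+n" w] by simp
qed

lemma any_vis: "(\<lambda>s t. \<exists>a. T s a t)\<^sup>*\<^sup>* s u \<Longrightarrow> \<exists>n. vis T s n u"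
proof (induction rule: converse_rtranclp_induct)
  case base then show ?case using vis_refl[of T u] by blast
next
  case (step x y)
  then obtain a n where "T x a y" "vis T y n u" by blast
  then show ?case
  proof (cases a)
    case None then show ?thesis using vis_tau[of T x y n u] \<open>T x a y\<close> \<open>vis T y n u\<close> by auto
  next
    case (Some b) then show ?thesis using vis_act[of T x b y n u] \<open>T x a y\<close> \<open>vis T y n u\<close> by auto
  qed
qed

context lts
begin

lemma sim_vis: "vis T t n u \<Longrightarrow> sim s t \<Longrightarrow> \<exists>u'. vis T s n u' \<and> sim u' u"
proof (induction arbitrary: s rule: vis.induct)
  case (vis_refl t)
  then show ?case using vis.vis_refl[of T s] by blast
next
  case (vis_tau t t' n u)
  have "sim t s" using vis_tau.prems by (rule sim_sym)
  from sim_step[OF this vis_tau.hyps(1)]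
  consider s1 where "taus T s s1" "sim t s1" "sim t' s1"
    | s1 s2 where "taus T s s1" "T s1 None s2" "sim t s1" "sim t' s2"
    unfolding match_def by blast
  then show ?case
  proof cases
    case (1 s1)
    have "sim s1 t'" using 1(3) by (rule sim_sym)
    then obtain u' where "vis T s1 n u'" "sim u' u" using vis_tau.IH by blast
    then show ?thesis using vis_taus_pre[OF 1(1) \<open>vis T s1 n u'\<close>] by blast
  next
    case (2 s1 s2)
    have "sim s2 t'" using 2(4) by (rule sim_sym)
    then obtain u' where "vis T s2 n u'" "sim u' u" using vis_tau.IH by blast
    then have "vis T s1 n u'" using vis.vis_tau[of T s1 s2 n u'] 2(2) by blast
    then show ?thesis using vis_taus_pre[OF 2(1) \<open>vis T s1 n u'\<close>] \<open>sim u' u\<close> by blast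
  qed
next
  case (vis_act t b t' n u)
  have "sim t s" using vis_act.prems by (rule sim_sym)
  from sim_step[OF this vis_act.hyps(1)]
  obtain s1 s2 where "taus T s s1" "T s1 (Some b) s2" "sim t s1" "sim t' s2"
    unfolding match_def by blast
  moreover have "sim s2 t'" using \<open>sim t' s2\<close> by (rule sim_sym)
  moreover then obtain u' where "vis T s2 n u'" "sim u' u" using vis_act.IH by blast
  ultimately have "vis T s1 (Suc n) u'" using vis.vis_act[of T s1 b s2 n u'] by blast
  then show ?case using vis_taus_pre[of T s s1 "Suc n" u', OF \<open>taus T s s1\<close>] \<open>sim u' u\<close> by blast
qed

end

locale bpa_loc =
  fixes V :: "'v set" and Act :: "'a option set" and Rules :: "('v \<times> 'a option \<times> 'v list) set"
  assumes bpa: "bpa V Act Rules" and nrm: "normed V Rules"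
begin

lemma rule_ok: "(A, a, \<alpha>) \<in> Rules \<Longrightarrow> A \<in> V \<and> \<alpha> \<in> lists V"
  using bpa unfolding bpa_def by blast

lemma step_closed: "bpa_step V Rules s a t \<Longrightarrow> t \<in> lists V"
proof -
  assume "bpa_step V Rules s a t"
  then obtain A \<alpha> \<beta> where "(A, a, \<alpha>) \<in> Rules" "\<beta> \<in> lists V" "t = \<alpha> @ \<beta>"
    unfolding bpa_step_def by blast
  then show ?thesis using rule_ok by auto
qed

lemma stepR_closed: "bpa_step_R V Rules R s a t \<Longrightarrow> t \<in> lists V"
  unfolding bpa_step_R_def using step_closed by blast

sublocale G: lts "lists V" "bpa_step V Rules"
  by unfold_locales (rule step_closed)

lemma ltsR: "lts (lists V) (bpa_step_R V Rules R)"
  by unfold_locales (rule stepR_closed)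

lemma step_append: "bpa_step V Rules s a t \<Longrightarrow> \<gamma> \<in> lists V \<Longrightarrow> bpa_step V Rules (s@\<gamma>) a (t@\<gamma>)"
  unfolding bpa_step_def by force

lemma step_append_inv:
  assumes "bpa_step V Rules (s@\<gamma>) a w" "s \<noteq> []"
  shows "\<exists>s'. bpa_step V Rules s a s' \<and> w = s'@\<gamma>"
proof -
  obtain A \<alpha> \<beta> where r: "(A, a, \<alpha>) \<in> Rules" "\<beta> \<in> lists V" "s@\<gamma> = A # \<beta>" "w = \<alpha> @ \<beta>"
    using assms(1) unfolding bpa_step_def by blast
  obtain s1 where s: "s = A # s1" "\<beta> = s1 @ \<gamma>" using assms(2) r(3) by (cases s) auto
  have "s1 \<in> lists V" using r(2) s(2) by simp
  then have "bpa_step V Rules s a (\<alpha> @ s1)" unfolding bpa_step_def using r(1) s(1) by blast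
  then show ?thesis using r(4) s(2) by auto
qed

lemma step_nil: "\<not> bpa_step V Rules [] a t"
  unfolding bpa_step_def by auto

lemma taus_append: "taus (bpa_step V Rules) s t \<Longrightarrow> \<gamma> \<in> lists V \<Longrightarrow> taus (bpa_step V Rules) (s@\<gamma>) (t@\<gamma>)"
  by (induction rule: rtranclp_induct) (auto intro: rtranclp.rtrancl_into_rtrancl step_append)

lemma any_append: "(\<lambda>s t. \<exists>a. bpa_step V Rules s a t)\<^sup>*\<^sup>* s t \<Longrightarrow> \<gamma> \<in> lists V \<Longrightarrow>
   (\<lambda>s t. \<exists>a. bpa_step V Rules s a t)\<^sup>*\<^sup>* (s@\<gamma>) (t@\<gamma>)"
  by (induction rule: rtranclp_induct) (auto intro: rtranclp.rtrancl_into_rtrancl step_append)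

lemma normed_word: "\<beta> \<in> lists V \<Longrightarrow> (\<lambda>s t. \<exists>a. bpa_step V Rules s a t)\<^sup>*\<^sup>* \<beta> []"
proof (induction \<beta>)
  case Nil then show ?case by simp
next
  case (Cons X \<beta>)
  have "(\<lambda>s t. \<exists>a. bpa_step V Rules s a t)\<^sup>*\<^sup>* [X] []" using nrm Cons.prems unfolding normed_def by auto
  from any_append[OF this, of \<beta>] Cons.prems have "(\<lambda>s t. \<exists>a. bpa_step V Rules s a t)\<^sup>*\<^sup>* (X#\<beta>) \<beta>" by simp
  then show ?case using Cons by (auto intro: rtranclp_trans)
qed

lemma sim_nil0: "(\<lambda>s t. \<exists>a. bpa_step V Rules s a t)\<^sup>*\<^sup>* x y \<Longrightarrow> G.sim x [] \<Longrightarrow>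
   taus (bpa_step V Rules) x y \<and> G.sim y []"
proof (induction rule: converse_rtranclp_induct)
  case base then show ?case by simp
next
  case (step x x1)
  then obtain a where "bpa_step V Rules x a x1" by blast
  with G.stuck[OF step_nil step.prems] have "a = None" "G.sim x1 []" by auto
  then show ?case using step \<open>bpa_step V Rules x a x1\<close> by (auto intro: converse_rtranclp_into_rtranclp)
qed

lemma sim_nil: "G.sim x [] \<Longrightarrow> taus (bpa_step V Rules) x []"
  using sim_nil0 normed_word G.sim_S by blast

lemma vis_nil_transfer: "G.sim s t \<Longrightarrow> vis (bpa_step V Rules) t n [] \<Longrightarrow> vis (bpa_step V Rules) s n []"
proof -
  let ?T = "bpa_step V Rules"
  assume a: "G.sim s t" "vis ?T t n []"
  then obtain u where u: "vis ?T s n u" "G.sim u []" using G.sim_vis by blast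
  have "vis ?T u 0 []"
    using vis_taus_pre[of ?T u "[]" 0 "[]", OF sim_nil[OF u(2)] vis.vis_refl] .
  then show ?thesis using vis_trans[of ?T s n u 0 "[]", OF u(1)] by simp
qed

lemma vis_decomp: "vis (bpa_step V Rules) s n u \<Longrightarrow> u = [] \<Longrightarrow> s = \<alpha>@\<gamma> \<Longrightarrow>
   \<exists>k\<le>n. vis (bpa_step V Rules) \<alpha> k [] \<and> vis (bpa_step V Rules) \<gamma> (n-k) []"
proof (induction arbitrary: \<alpha> rule: vis.induct)
  case (vis_refl s)
  then have "\<alpha> = []" "\<gamma> = []" by auto
  then show ?case using vis.vis_refl[of "bpa_step V Rules" "[]"] by auto
next
  case (vis_tau s s' n u)
  let ?T = "bpa_step V Rules"
  show ?case
  proof (cases "\<alpha> = []")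
    case True
    have "vis ?T s n u" using vis.vis_tau[OF vis_tau.hyps(1,2)] .
    then show ?thesis using True vis_tau.prems vis.vis_refl[of ?T "[]"] by (intro exI[of _ 0]) auto
  next
    case False
    obtain \<alpha>' where a': "?T \<alpha> None \<alpha>'" "s' = \<alpha>'@\<gamma>"
      using step_append_inv[OF _ False] vis_tau.hyps(1) vis_tau.prems(2) by blast
    obtain k where k: "k \<le> n" "vis ?T \<alpha>' k []" "vis ?T \<gamma> (n-k) []"
      using vis_tau.IH[OF vis_tau.prems(1) a'(2)] by blast
    have "vis ?T \<alpha> k []" using vis.vis_tau[OF a'(1) k(2)] .
    then show ?thesis using k by blast
  qed
next
  case (vis_act s b s' n u)
  let ?T = "bpa_step V Rules"
  show ?case
  proof (cases "\<alpha> = []")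
    case True
    have "vis ?T s (Suc n) u" using vis.vis_act[OF vis_act.hyps(1,2)] .
    then show ?thesis using True vis_act.prems vis.vis_refl[of ?T "[]"] by (intro exI[of _ 0]) auto
  next
    case False
    obtain \<alpha>' where a': "?T \<alpha> (Some b) \<alpha>'" "s' = \<alpha>'@\<gamma>"
      using step_append_inv[OF _ False] vis_act.hyps(1) vis_act.prems(2) by blast
    obtain k where k: "k \<le> n" "vis ?T \<alpha>' k []" "vis ?T \<gamma> (n-k) []"
      using vis_act.IH[OF vis_act.prems(1) a'(2)] by blast
    have "vis ?T \<alpha> (Suc k) []" using vis.vis_act[OF a'(1) k(2)] .
    then show ?thesis using k by (intro exI[of _ "Suc k"]) auto
  qed
qed

lemma norm0:
  assumes "\<gamma> \<in> lists V" "G.sim (\<alpha>@\<gamma>) \<gamma>"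
  shows "taus (bpa_step V Rules) \<alpha> []"
proof -
  let ?T = "bpa_step V Rules"
  obtain n where "vis ?T \<gamma> n []" using any_vis[OF normed_word[OF assms(1)]] by blast
  define m where "m = (LEAST n. vis ?T \<gamma> n [])"
  have vm: "vis ?T \<gamma> m []" unfolding m_def using \<open>vis ?T \<gamma> n []\<close> by (rule LeastI)
  have "vis ?T (\<alpha>@\<gamma>) m []" using vis_nil_transfer[OF assms(2) vm] .
  then obtain k where k: "k \<le> m" "vis ?T \<alpha> k []" "vis ?T \<gamma> (m-k) []"
    using vis_decomp[of "\<alpha>@\<gamma>" m "[]" \<alpha> \<gamma>] by blast
  have "m \<le> m - k" unfolding m_def using k(3) unfolding m_def by (rule Least_le)
  then have "k = 0" using k(1) by simp
  then show ?thesis using k(2) vis0_taus[of ?T \<alpha> 0 "[]"] by blast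
qed

lemma bisim_eq: "bpa_bisim V Rules = G.sim"
  unfolding bpa_bisim_def using G.bisimilar_iff by blast

lemma sim_prepend:
  assumes "G.sim \<delta> \<delta>'" "\<alpha> \<in> lists V"
  shows "G.sim (\<alpha>@\<delta>) (\<alpha>@\<delta>')"
proof -
  define Q where "Q = {(\<alpha>@\<delta>, \<alpha>@\<delta>') | \<alpha> \<delta> \<delta>'. \<alpha> \<in> lists V \<and> G.sim \<delta> \<delta>'}"
  have "G.sbb Q"
  proof (rule G.sbb_symI)
    show "Q \<subseteq> lists V \<times> lists V" unfolding Q_def using G.sim_S by fastforce
    show "Q\<inverse> = Q" unfolding Q_def using G.sim_sym by blast
    show "sbt (bpa_step V Rules) Q" unfolding sbt_def
    proof (intro allI impI)
      fix x y a x' assume "(x,y) \<in> Q" and tr: "bpa_step V Rules x a x'"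
      then obtain \<alpha> \<delta> \<delta>' where q: "x = \<alpha>@\<delta>" "y = \<alpha>@\<delta>'" "\<alpha> \<in> lists V" "G.sim \<delta> \<delta>'"
        unfolding Q_def by blast
      have sub: "{(s,t). G.sim s t} \<subseteq> Q" unfolding Q_def by force
      show "match (bpa_step V Rules) Q x y a x'"
      proof (cases "\<alpha> = []")
        case True
        then show ?thesis using match_mono[OF G.sim_step[OF q(4)] sub] q tr by simp
      next
        case False
        obtain \<alpha>' where \<alpha>': "bpa_step V Rules \<alpha> a \<alpha>'" "x' = \<alpha>'@\<delta>"
          using step_append_inv[OF _ False] tr q(1) by blast
        have "\<delta>' \<in> lists V" using G.sim_S q(4) by blast
        then have "bpa_step V Rules y a (\<alpha>'@\<delta>')" using step_append \<alpha>'(1) q(2) by blast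
        moreover have "(x, y) \<in> Q" "(x', \<alpha>'@\<delta>') \<in> Q"
          unfolding Q_def using q \<alpha>' step_closed by blast+
        ultimately show ?thesis unfolding match_def by blast
      qed
    qed
  qed
  moreover have "(\<alpha>@\<delta>, \<alpha>@\<delta>') \<in> Q" unfolding Q_def using assms by blast
  ultimately show ?thesis by (rule G.coind)
qed

lemma L3a: "\<alpha> \<in> lists (R_of V Rules \<gamma>) \<Longrightarrow> \<gamma> \<in> lists V \<Longrightarrow> G.sim (\<alpha>@\<gamma>) \<gamma>"
proof (induction \<alpha>)
  case Nil then show ?case using G.sim_refl by simp
next
  case (Cons X \<alpha>)
  then have X: "X \<in> V" "G.sim (X#\<gamma>) \<gamma>" unfolding R_of_def bisim_eq by auto
  have "G.sim (\<alpha>@\<gamma>) \<gamma>" using Cons by auto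
  then have "G.sim ([X]@(\<alpha>@\<gamma>)) ([X]@\<gamma>)" using sim_prepend[of "\<alpha>@\<gamma>" \<gamma> "[X]"] X by simp
  then show ?case using X G.sim_trans by auto
qed

lemma L3b: "\<alpha> \<in> lists V \<Longrightarrow> \<gamma> \<in> lists V \<Longrightarrow> G.sim (\<alpha>@\<gamma>) \<gamma> \<Longrightarrow> \<alpha> \<in> lists (R_of V Rules \<gamma>)"
proof (induction \<alpha>)
  case Nil then show ?case by simp
next
  case (Cons X \<alpha>)
  let ?T = "bpa_step V Rules"
  have "taus ?T ([X]@\<alpha>) []" using norm0 Cons.prems by simp
  then have "vis ?T ([X]@\<alpha>) 0 []" using vis_taus_pre[of ?T "[X]@\<alpha>" "[]" 0 "[]"] vis.vis_refl[of ?T "[]"] by blast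
  then obtain k where "k \<le> 0" "vis ?T [X] k []" "vis ?T \<alpha> (0-k) []"
    using vis_decomp[of "[X]@\<alpha>" 0 "[]" "[X]" \<alpha>] by blast
  then have tX: "taus ?T [X] []" and ta: "taus ?T \<alpha> []"
    using vis0_taus[of ?T "[X]" 0 "[]"] vis0_taus[of ?T \<alpha> 0 "[]"] by auto
  have p1: "taus ?T (X#\<alpha>@\<gamma>) (\<alpha>@\<gamma>)" using taus_append[OF tX, of "\<alpha>@\<gamma>"] Cons.prems by simp
  have p2: "taus ?T (\<alpha>@\<gamma>) \<gamma>" using taus_append[OF ta, of \<gamma>] Cons.prems by simp
  have "G.sim \<gamma> (X#\<alpha>@\<gamma>)" using Cons.prems G.sim_sym by auto
  then have s1: "G.sim \<gamma> (\<alpha>@\<gamma>)" using G.stutter[OF _ p1 p2] G.sim_refl Cons.prems by blast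
  then have "\<alpha> \<in> lists (R_of V Rules \<gamma>)" using Cons G.sim_sym by auto
  moreover have "[X] \<in> lists V" using Cons.prems by auto
  then have "G.sim ([X]@\<gamma>) ([X]@(\<alpha>@\<gamma>))" using sim_prepend[OF s1, of "[X]"] by blast
  then have "G.sim (X#\<gamma>) \<gamma>" using Cons.prems(3) G.sim_trans by auto
  ultimately show ?case unfolding R_of_def bisim_eq using Cons.prems by auto
qed

end


locale bpa_g = bpa_loc V Act Rules
  for V :: "'v set" and Act :: "'a option set" and Rules :: "('v \<times> 'a option \<times> 'v list) set" +
  fixes \<gamma> :: "'v list"
  assumes gam: "\<gamma> \<in> lists V"
begin

abbreviation RR where "RR \<equiv> R_of V Rules \<gamma>"
abbreviation TR where "TR \<equiv> bpa_step_R V Rules (R_of V Rules \<gamma>)"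
abbreviation TG where "TG \<equiv> bpa_step V Rules"

sublocale H: lts "lists V" "bpa_step_R V Rules (R_of V Rules \<gamma>)"
  by (rule ltsR)

lemma stepR_step: "TR s a t \<Longrightarrow> TG s a t" unfolding bpa_step_R_def by simp

lemma stuckR: "s \<in> lists RR \<Longrightarrow> \<not> TR s a t" unfolding bpa_step_R_def by simp

lemma stepR_intro: "TG s a t \<Longrightarrow> s \<notin> lists RR \<Longrightarrow> TR s a t" unfolding bpa_step_R_def by simp

lemma tausR_taus: "taus TR s t \<Longrightarrow> taus TG s t"
proof (induction rule: rtranclp_induct)
  case base show ?case by simp
next
  case (step y z)
  have "TG y None z" using step(2) stepR_step by simp
  then show ?case using step(3) rtranclp.rtrancl_into_rtrancl[of "\<lambda>x y. TG x None y" s y z] by simp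
qed

lemma decomp_path:
  assumes "taus TG (b@\<gamma>) w"
  shows "(\<exists>b''. taus TR b b'' \<and> w = b''@\<gamma>) \<or>
         (\<exists>\<delta> \<in> lists RR. taus TG (b@\<gamma>) (\<delta>@\<gamma>) \<and> taus TG (\<delta>@\<gamma>) w)"
  using assms
proof (induction rule: rtranclp_induct)
  case base then show ?case by blast
next
  case (step w w')
  have st: "TG w None w'" using step(2) by simp
  from step.IH show ?case
  proof
    assume "\<exists>b''. taus TR b b'' \<and> w = b''@\<gamma>"
    then obtain b'' where b'': "taus TR b b''" "w = b''@\<gamma>" by blast
    show ?thesis
    proof (cases "b'' \<in> lists RR")
      case True
      have "taus TG b b''" using tausR_taus[OF b''(1)] .
      then have "taus TG (b@\<gamma>) (b''@\<gamma>)" using taus_append gam by blast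
      moreover have "taus TG (b''@\<gamma>) w'" using st b''(2) r_into_rtranclp[of "\<lambda>x y. TG x None y" w w'] by simp
      ultimately show ?thesis using True by blast
    next
      case False
      then have "b'' \<noteq> []" by auto
      obtain b3 where b3: "TG b'' None b3" "w' = b3@\<gamma>"
        using step_append_inv[of b'' \<gamma> None w'] st b''(2) \<open>b'' \<noteq> []\<close> by blast
      then have "TR b'' None b3" using False stepR_intro by blast
      then have "taus TR b b3" using b''(1) rtranclp.rtrancl_into_rtrancl[of "\<lambda>x y. TR x None y" b b'' b3] by simp
      then show ?thesis using b3(2) by blast
    qed
  next
    assume "\<exists>\<delta> \<in> lists RR. taus TG (b@\<gamma>) (\<delta>@\<gamma>) \<and> taus TG (\<delta>@\<gamma>) w"
    then obtain \<delta> where d: "\<delta> \<in> lists RR" "taus TG (b@\<gamma>) (\<delta>@\<gamma>)" "taus TG (\<delta>@\<gamma>) w" by blast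
    have "taus TG (\<delta>@\<gamma>) w'" using st d(3) rtranclp.rtrancl_into_rtrancl[of "\<lambda>x y. TG x None y" "\<delta>@\<gamma>" w w'] by simp
    then show ?thesis using d by blast
  qed
qed

lemma E0:
  assumes h: "H.sim b a" "a \<in> lists RR"
  shows "\<exists>\<delta> \<in> lists RR. taus TG b \<delta>"
proof -
  have "b \<in> lists V" using H.sim_S h(1) by blast
  have stk: "\<And>c u. \<not> TR a c u" using stuckR h(2) by blast
  have "(\<lambda>s t. \<exists>c. TG s c t)\<^sup>*\<^sup>* b []" using normed_word[OF \<open>b \<in> lists V\<close>] .
  then show ?thesis using h(1)
  proof (induction rule: converse_rtranclp_induct)
    case base then show ?case by (intro bexI[of _ "[]"]) auto
  next
    case (step x x1)
    obtain c where c: "TG x c x1" using step(1) by blast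
    show ?case
    proof (cases "x \<in> lists RR")
      case True then show ?thesis by blast
    next
      case False
      then have "TR x c x1" using stepR_intro c by blast
      from H.stuck[OF stk step.prems this] have "c = None" "H.sim x1 a" by auto
      then obtain \<delta> where "\<delta> \<in> lists RR" "taus TG x1 \<delta>" using step.IH by blast
      moreover have "TG x None x1" using c \<open>c = None\<close> by simp
      ultimately show ?thesis using converse_rtranclp_into_rtranclp[of "\<lambda>x y. TG x None y" x x1 \<delta>] by auto
    qed
  qed
qed

lemma E:
  assumes h: "H.sim b a" "a \<in> lists RR"
  shows "G.sim (b@\<gamma>) \<gamma>"
proof -
  define P1 where "P1 = {(b@\<gamma>, \<gamma>) | b. \<exists>a \<in> lists RR. H.sim b a}"
  define P where "P = {(s,t). G.sim s t} \<union> P1 \<union> P1\<inverse>"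
  have sub: "{(s,t). G.sim s t} \<subseteq> P" unfolding P_def by blast
  have "G.sbb P"
  proof (rule G.sbb_symI)
    have hb: "\<And>b a. H.sim b a \<Longrightarrow> b@\<gamma> \<in> lists V" by (metis H.sim_S append_in_lists_conv gam)
    have "P1 \<subseteq> lists V \<times> lists V" unfolding P1_def using hb gam by blast
    moreover have "{(s,t). G.sim s t} \<subseteq> lists V \<times> lists V" using G.sim_S by blast
    ultimately show "P \<subseteq> lists V \<times> lists V" unfolding P_def by blast
    have sy: "{(s,t). G.sim s t}\<inverse> = {(s,t). G.sim s t}" using G.sim_sym by blast
    show "P\<inverse> = P" unfolding P_def converse_Un sy by blast
    show "sbt TG P" unfolding sbt_def
    proof (intro allI impI)
      fix x y c x' assume xy: "(x,y) \<in> P" and tr: "TG x c x'"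
      consider (s) "G.sim x y" | (p) "(x,y) \<in> P1" | (q) "(y,x) \<in> P1" using xy unfolding P_def by blast
      then show "match TG P x y c x'"
      proof cases
        case s then show ?thesis using match_mono[OF G.sim_step[OF s tr] sub] by blast
      next
        case p
        then obtain b a where ba: "x = b@\<gamma>" "y = \<gamma>" "a \<in> lists RR" "H.sim b a" unfolding P1_def by blast
        show ?thesis
        proof (cases "b \<in> lists RR")
          case True
          then have "G.sim x y" using L3a gam ba by blast
          then show ?thesis using match_mono[OF G.sim_step[OF _ tr] sub] by blast
        next
          case False
          then have "b \<noteq> []" by auto
          obtain b' where b': "TG b c b'" "x' = b'@\<gamma>"
            using step_append_inv[of b \<gamma> c x'] tr ba(1) \<open>b \<noteq> []\<close> by blast
          have "TR b c b'" using stepR_intro b'(1) False by blast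
          have stk: "\<And>c u. \<not> TR a c u" using stuckR ba(3) by blast
          from H.stuck[OF stk ba(4) \<open>TR b c b'\<close>] have "c = None" "H.sim b' a" by auto
          have "(x, y) \<in> P" "(x', y) \<in> P" unfolding P_def P1_def using ba b' \<open>H.sim b' a\<close> by blast+
          moreover have "taus TG y y" by simp
          ultimately show ?thesis unfolding match_def using \<open>c = None\<close> by blast
        qed
      next
        case q
        then obtain b a where ba: "y = b@\<gamma>" "x = \<gamma>" "a \<in> lists RR" "H.sim b a" unfolding P1_def by blast
        obtain \<delta> where d: "\<delta> \<in> lists RR" "taus TG b \<delta>" using E0 ba(3,4) by blast
        have p: "taus TG y (\<delta>@\<gamma>)" using taus_append[OF d(2) gam] ba(1) by simp
        have "G.sim (\<delta>@\<gamma>) \<gamma>" using L3a d(1) gam by blast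
        then have "G.sim x (\<delta>@\<gamma>)" using ba(2) G.sim_sym by blast
        then show ?thesis using match_mono[OF match_prefix[OF p G.sim_step[OF _ tr]] sub] by blast
      qed
    qed
  qed
  moreover have "(b@\<gamma>, \<gamma>) \<in> P" unfolding P_def P1_def using h by blast
  ultimately show ?thesis by (rule G.coind)
qed

lemma forward:
  assumes h: "H.sim \<alpha> \<beta>"
  shows "G.sim (\<alpha>@\<gamma>) (\<beta>@\<gamma>)"
proof -
  define Q1 where "Q1 = {(a@\<gamma>, b@\<gamma>) | a b. H.sim a b}"
  define Q where "Q = Q1 \<union> {(s,t). G.sim s t}"
  have sub: "{(s,t). G.sim s t} \<subseteq> Q" unfolding Q_def by blast
  have "G.sbb Q"
  proof (rule G.sbb_symI)
    have hb: "\<And>b a. H.sim b a \<Longrightarrow> b@\<gamma> \<in> lists V \<and> a@\<gamma> \<in> lists V" by (metis H.sim_S append_in_lists_conv gam)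
    have "Q1 \<subseteq> lists V \<times> lists V" unfolding Q1_def using hb by blast
    moreover have "{(s,t). G.sim s t} \<subseteq> lists V \<times> lists V" using G.sim_S by blast
    ultimately show "Q \<subseteq> lists V \<times> lists V" unfolding Q_def by blast
    have sy: "{(s,t). G.sim s t}\<inverse> = {(s,t). G.sim s t}" using G.sim_sym by blast
    have sy1: "Q1\<inverse> = Q1" unfolding Q1_def using H.sim_sym by blast
    show "Q\<inverse> = Q" unfolding Q_def converse_Un sy sy1 by blast
    show "sbt TG Q" unfolding sbt_def
    proof (intro allI impI)
      fix x y c x' assume xy: "(x,y) \<in> Q" and tr: "TG x c x'"
      consider (s) "G.sim x y" | (q) a b where "x = a@\<gamma>" "y = b@\<gamma>" "H.sim a b"
        using xy unfolding Q_def Q1_def by blast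
      then show "match TG Q x y c x'"
      proof cases
        case s then show ?thesis using match_mono[OF G.sim_step[OF s tr] sub] by blast
      next
        case q
        show ?thesis
        proof (cases "a \<in> lists RR \<or> b \<in> lists RR")
          case True
          have "G.sim x y"
          proof (cases "a \<in> lists RR")
            case True
            have "G.sim (a@\<gamma>) \<gamma>" using L3a True gam by blast
            moreover have "G.sim (b@\<gamma>) \<gamma>" using E[OF H.sim_sym[OF q(3)] True] .
            ultimately show ?thesis using q G.sim_sym G.sim_trans by blast
          next
            case False
            then have bR: "b \<in> lists RR" using \<open>a \<in> lists RR \<or> b \<in> lists RR\<close> by blast
            have "G.sim (a@\<gamma>) \<gamma>" using E[OF q(3) bR] .
            moreover have "G.sim (b@\<gamma>) \<gamma>" using L3a bR gam by blast
            ultimately show ?thesis using q G.sim_sym G.sim_trans by blast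
          qed
          then show ?thesis using match_mono[OF G.sim_step[OF _ tr] sub] by blast
        next
          case False
          then have naR: "a \<notin> lists RR" and nbR: "b \<notin> lists RR" by auto
          then have "a \<noteq> []" by auto
          obtain a' where a': "TG a c a'" "x' = a'@\<gamma>"
            using step_append_inv[of a \<gamma> c x'] tr q(1) \<open>a \<noteq> []\<close> by blast
          have "TR a c a'" using stepR_intro a'(1) naR by blast
          from H.sim_step[OF q(3) this]
          consider (m1) b'' where "c = None" "taus TR b b''" "H.sim a b''" "H.sim a' b''"
            | (m2) b'' b3 where "taus TR b b''" "TR b'' c b3" "H.sim a b''" "H.sim a' b3"
            unfolding match_def by blast
          then show ?thesis
          proof cases
            case m1
            have "taus TG y (b''@\<gamma>)" using taus_append[OF tausR_taus[OF m1(2)] gam] q(2) by simp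
            moreover have "(x, b''@\<gamma>) \<in> Q" "(x', b''@\<gamma>) \<in> Q"
              unfolding Q_def Q1_def using q(1) a'(2) m1 by blast+
            ultimately show ?thesis unfolding match_def using m1(1) by blast
          next
            case m2
            have "taus TG y (b''@\<gamma>)" using taus_append[OF tausR_taus[OF m2(1)] gam] q(2) by simp
            moreover have "TG (b''@\<gamma>) c (b3@\<gamma>)" using step_append[OF stepR_step[OF m2(2)] gam] .
            moreover have "(x, b''@\<gamma>) \<in> Q" "(x', b3@\<gamma>) \<in> Q"
              unfolding Q_def Q1_def using q(1) a'(2) m2 by blast+
            ultimately show ?thesis unfolding match_def by blast
          qed
        qed
      qed
    qed
  qed
  moreover have "(\<alpha>@\<gamma>, \<beta>@\<gamma>) \<in> Q" unfolding Q_def Q1_def using h by blast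
  ultimately show ?thesis by (rule G.coind)
qed

lemma backward:
  assumes h: "\<alpha> \<in> lists V" "\<beta> \<in> lists V" "G.sim (\<alpha>@\<gamma>) (\<beta>@\<gamma>)"
  shows "H.sim \<alpha> \<beta>"
proof -
  define Q where "Q = {(a,b). a \<in> lists V \<and> b \<in> lists V \<and> G.sim (a@\<gamma>) (b@\<gamma>)}"
  have contra: "a \<in> lists RR" if "G.sim (a@\<gamma>) (\<delta>@\<gamma>)" "\<delta> \<in> lists RR" "a \<in> lists V" for a \<delta>
  proof -
    have "G.sim (\<delta>@\<gamma>) \<gamma>" using L3a that(2) gam by blast
    then have "G.sim (a@\<gamma>) \<gamma>" using G.sim_trans that(1) by blast
    then show ?thesis using L3b that(3) gam by blast
  qed
  have "H.sbb Q"
  proof (rule H.sbb_symI)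
    show "Q \<subseteq> lists V \<times> lists V" unfolding Q_def by blast
    show "Q\<inverse> = Q" unfolding Q_def using G.sim_sym by blast
    show "sbt TR Q" unfolding sbt_def
    proof (intro allI impI)
      fix a b c a' assume ab: "(a,b) \<in> Q" and tr: "TR a c a'"
      then have aV: "a \<in> lists V" "b \<in> lists V" and s: "G.sim (a@\<gamma>) (b@\<gamma>)" unfolding Q_def by auto
      have naR: "a \<notin> lists RR" using tr stuckR by blast
      have trG: "TG (a@\<gamma>) c (a'@\<gamma>)" using step_append[OF stepR_step[OF tr] gam] .
      have a'V: "a' \<in> lists V" using stepR_closed tr by blast
      from G.sim_step[OF s trG]
      consider (m1) w where "c = None" "taus TG (b@\<gamma>) w" "G.sim (a@\<gamma>) w" "G.sim (a'@\<gamma>) w"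
        | (m2) w w' where "taus TG (b@\<gamma>) w" "TG w c w'" "G.sim (a@\<gamma>) w" "G.sim (a'@\<gamma>) w'"
        unfolding match_def by blast
      then show "match TR Q a b c a'"
      proof cases
        case m1
        from decomp_path[OF m1(2)] show ?thesis
        proof
          assume "\<exists>b''. taus TR b b'' \<and> w = b''@\<gamma>"
          then obtain b'' where b'': "taus TR b b''" "w = b''@\<gamma>" by blast
          have "b'' \<in> lists V" using H.taus_closed[OF b''(1) aV(2)] .
          then have "(a, b'') \<in> Q" "(a', b'') \<in> Q" unfolding Q_def using aV a'V m1 b''(2) by auto
          then show ?thesis unfolding match_def using m1(1) b''(1) by blast
        next
          assume "\<exists>\<delta> \<in> lists RR. taus TG (b@\<gamma>) (\<delta>@\<gamma>) \<and> taus TG (\<delta>@\<gamma>) w"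
          then obtain \<delta> where d: "\<delta> \<in> lists RR" "taus TG (b@\<gamma>) (\<delta>@\<gamma>)" "taus TG (\<delta>@\<gamma>) w" by blast
          have "G.sim (a@\<gamma>) (\<delta>@\<gamma>)" using G.stutter[OF s d(2) d(3) m1(3)] .
          then have False using contra d(1) aV naR by blast
          then show ?thesis ..
        qed
      next
        case m2
        from decomp_path[OF m2(1)] show ?thesis
        proof
          assume "\<exists>b''. taus TR b b'' \<and> w = b''@\<gamma>"
          then obtain b'' where b'': "taus TR b b''" "w = b''@\<gamma>" by blast
          have b''V: "b'' \<in> lists V" using H.taus_closed[OF b''(1) aV(2)] .
          have nb: "b'' \<notin> lists RR"
          proof
            assume "b'' \<in> lists RR"
            then show False using contra[of a b''] m2(3) b''(2) aV naR by blast
          qed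
          then have "b'' \<noteq> []" by auto
          obtain b3 where b3: "TG b'' c b3" "w' = b3@\<gamma>"
            using step_append_inv[of b'' \<gamma> c w'] m2(2) b''(2) \<open>b'' \<noteq> []\<close> by blast
          have "TR b'' c b3" using stepR_intro b3(1) nb by blast
          have "b3 \<in> lists V" using step_closed b3(1) by blast
          then have "(a, b'') \<in> Q" "(a', b3) \<in> Q" unfolding Q_def using aV a'V b''V m2 b''(2) b3(2) by auto
          then show ?thesis unfolding match_def using b''(1) \<open>TR b'' c b3\<close> by blast
        next
          assume "\<exists>\<delta> \<in> lists RR. taus TG (b@\<gamma>) (\<delta>@\<gamma>) \<and> taus TG (\<delta>@\<gamma>) w"
          then obtain \<delta> where d: "\<delta> \<in> lists RR" "taus TG (b@\<gamma>) (\<delta>@\<gamma>)" "taus TG (\<delta>@\<gamma>) w" by blast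
          have "G.sim (a@\<gamma>) (\<delta>@\<gamma>)" using G.stutter[OF s d(2) d(3) m2(3)] .
          then have False using contra d(1) aV naR by blast
          then show ?thesis ..
        qed
      qed
    qed
  qed
  moreover have "(\<alpha>, \<beta>) \<in> Q" unfolding Q_def using h by blast
  ultimately show ?thesis by (rule H.coind)
qed

end

theorem proposition4p6:
  fixes V :: "'v set" and Act :: "'a option set" and Rules :: "('v \<times> 'a option \<times> 'v list) set"
  assumes "bpa V Act Rules" and "normed V Rules"
    and "\<alpha> \<in> lists V" and "\<beta> \<in> lists V" and "\<gamma> \<in> lists V"
  shows "bpa_bisim V Rules (\<alpha> @ \<gamma>) (\<beta> @ \<gamma>) \<longleftrightarrow> bpa_bisim_R V Rules (R_of V Rules \<gamma>) \<alpha> \<beta>"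
proof -
  interpret bpa_g V Act Rules \<gamma> by unfold_locales (use assms in auto)
  have e: "bpa_bisim_R V Rules (R_of V Rules \<gamma>) = H.sim"
    unfolding bpa_bisim_R_def by (intro ext) (rule H.bisimilar_iff)
  show ?thesis unfolding e bisim_eq using forward backward assms(3,4) by blast
qed

end
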